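(* Let $\Phi=\{f_t\}$ be an Anosov flow on a closed manifold $M$ of dimension $n$ preserving the smooth volume form $\Omega$ induced by a Riemannian metric $\mathcal{R}$ (norm $\|\cdot\|$), with splitting $TM=E^{ss}\oplus E^c\oplus E^{uu}$, $n_s=\dim E^{ss}$, $n_u=\dim E^{uu}$ and constants $c,\mu_\pm,\lambda_\pm$ as below. Let $\mathcal{R}'$ be a (continuous) Riemannian metric with norm $\|\cdot\|'$ for which the generator $X$ is a unit vector and $E^c\oplus E^{ss}\oplus E^{uu}$ is an orthogonal splitting; let $\Omega'=\phi\,\Omega$ be its volume form, $L=\max_M\phi/\min_M\phi$, let $b_-,b_+>0$ satisfy $b_-\|v\|\le\|v\|'\le b_+\|v\|$ for all $v\in TM$, and $b=b_+/b_-$. Then for all $v\in E^{ss}$, $w\in E^{uu}$ and $t\ge0$, $$\|Tf_{-t}(v\wedge w)\|'\le L\,(bc)^{n-3}\,\big(\mu_+^{n_s-1}\lambda_+^{n_u-1}\big)^t\,\|v\wedge w\|'.$$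
   Context: $\Phi$ Anosov means: non-singular flow with a $Tf_t$-invariant splitting $TM=E^{ss}\oplus E^c\oplus E^{uu}$, $E^c$ spanned by the generator $X$, and constants $c>0$, $0<\mu_-\le\mu_+<1$, $\lambda_+\ge\lambda_->1$ such that for $v\in E^{ss}$, $w\in E^{uu}$, $t\ge0$: $\frac1c\mu_-^t\|v\|\le\|Tf_t v\|\le c\mu_+^t\|v\|$ and $\frac1c\lambda_-^t\|w\|\le\|Tf_t w\|\le c\lambda_+^t\|w\|$. The norm $\|v\wedge w\|'$ of a wedge product is the area (volume) of the parallelepiped spanned, measured with respect to $\mathcal{R}'$. *)

theory Defs
  imports "HOL-Analysis.Analysis"
begin

text \<open>Abstract model of a (measurably trivialised) tangent bundle: fibres are real^'n,
 the derivative cocycle Tf_t at x is the matrix Df t x, a Riemannian metric is a field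
 of symmetric positive definite matrices G x.\<close>

definition ip :: "('m \<Rightarrow> real^'n^'n) \<Rightarrow> 'm \<Rightarrow> real^'n \<Rightarrow> real^'n \<Rightarrow> real" where
  "ip G x u v = u \<bullet> (G x *v v)"

definition nrm :: "('m \<Rightarrow> real^'n^'n) \<Rightarrow> 'm \<Rightarrow> real^'n \<Rightarrow> real" where
  "nrm G x v = sqrt (ip G x v v)"

definition wedge_norm :: "('m \<Rightarrow> real^'n^'n) \<Rightarrow> 'm \<Rightarrow> real^'n \<Rightarrow> real^'n \<Rightarrow> real" where
  "wedge_norm G x v w = sqrt (ip G x v v * ip G x w w - (ip G x v w)\<^sup>2)"

definition riem_metric :: "('m \<Rightarrow> real^'n^'n) \<Rightarrow> bool" where
  "riem_metric G \<longleftrightarrow> (\<forall>x. transpose (G x) = G x \<and> (\<forall>v. v \<noteq> 0 \<longrightarrow> ip G x v v > 0))"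

definition flow_cocycle :: "(real \<Rightarrow> 'm \<Rightarrow> 'm) \<Rightarrow> (real \<Rightarrow> 'm \<Rightarrow> real^'n^'n) \<Rightarrow> ('m \<Rightarrow> real^'n) \<Rightarrow> bool" where
  "flow_cocycle f Df X \<longleftrightarrow>
     (\<forall>x. f 0 x = x) \<and> (\<forall>s t x. f (s + t) x = f s (f t x)) \<and>
     (\<forall>x. Df 0 x = mat 1) \<and> (\<forall>s t x. Df (s + t) x = Df s (f t x) ** Df t x) \<and>
     (\<forall>x. X x \<noteq> 0) \<and> (\<forall>t x. Df t x *v X x = X (f t x))"

text \<open>The flow preserves the volume form induced by G (in the trivialisation the volume
 form at x is sqrt(det G x) times the standard determinant).\<close>
definition preserves_volume :: "(real \<Rightarrow> 'm \<Rightarrow> 'm) \<Rightarrow> (real \<Rightarrow> 'm \<Rightarrow> real^'n^'n) \<Rightarrow> ('m \<Rightarrow> real^'n^'n) \<Rightarrow> bool" where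
  "preserves_volume f Df G \<longleftrightarrow>
     (\<forall>t x. sqrt (det (G (f t x))) * det (Df t x) = sqrt (det (G x)))"

definition anosov :: "(real \<Rightarrow> 'm \<Rightarrow> 'm) \<Rightarrow> (real \<Rightarrow> 'm \<Rightarrow> real^'n^'n) \<Rightarrow> ('m \<Rightarrow> real^'n)
    \<Rightarrow> ('m \<Rightarrow> (real^'n) set) \<Rightarrow> ('m \<Rightarrow> (real^'n) set) \<Rightarrow> ('m \<Rightarrow> real^'n^'n)
    \<Rightarrow> real \<Rightarrow> real \<Rightarrow> real \<Rightarrow> real \<Rightarrow> real \<Rightarrow> bool" where
  "anosov f Df X Ess Euu G c mum mup lam lap \<longleftrightarrow>
     flow_cocycle f Df X \<and>
     (\<forall>x. subspace (Ess x) \<and> subspace (Euu x) \<and>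
          dim (Ess x) + dim (Euu x) + 1 = CARD('n) \<and>
          span (Ess x \<union> Euu x \<union> {X x}) = UNIV) \<and>
     (\<forall>t x. (\<lambda>v. Df t x *v v) ` Ess x = Ess (f t x) \<and> (\<lambda>v. Df t x *v v) ` Euu x = Euu (f t x)) \<and>
     c > 0 \<and> 0 < mum \<and> mum \<le> mup \<and> mup < 1 \<and> 1 < lam \<and> lam \<le> lap \<and>
     (\<forall>x v t. v \<in> Ess x \<longrightarrow> t \<ge> 0 \<longrightarrow>
        (1/c) * mum powr t * nrm G x v \<le> nrm G (f t x) (Df t x *v v) \<and>
        nrm G (f t x) (Df t x *v v) \<le> c * mup powr t * nrm G x v) \<and>
     (\<forall>x w t. w \<in> Euu x \<longrightarrow> t \<ge> 0 \<longrightarrow>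
        (1/c) * lam powr t * nrm G x w \<le> nrm G (f t x) (Df t x *v w) \<and>
        nrm G (f t x) (Df t x *v w) \<le> c * lap powr t * nrm G x w)"

end

theory Submission imports Defs begin


definition pd :: "real^'n^'n \<Rightarrow> bool" where
  "pd B \<longleftrightarrow> transpose B = B \<and> (\<forall>x. x \<noteq> 0 \<longrightarrow> x \<bullet> (B *v x) > 0)"

lemma pd_sym: "pd B \<Longrightarrow> B$i$j = B$j$i"
proof -
  assume "pd B" then have "transpose B = B" by (simp add: pd_def)
  then have "(transpose B)$j$i = B$j$i" by simp
  then show ?thesis by (simp add: transpose_def)
qed

lemma axis_mult: "(B::real^'n^'n) *v axis j 1 = column j B"
  by (simp add: vec_eq_iff matrix_vector_mult_def axis_def column_def if_distrib cong: if_cong)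

lemma pd_diag_pos: "pd B \<Longrightarrow> B$i$i > 0"
proof -
  assume "pd B"
  then have "axis i 1 \<bullet> (B *v axis i (1::real)) > 0" unfolding pd_def
    by (simp add: axis_eq_0_iff)
  then show ?thesis by (simp add: axis_mult column_def inner_axis inner_commute[of "axis i 1"])
qed

lemma inner_mat_transpose: "(x::real^'n) \<bullet> (transpose E *v y) = (E *v x) \<bullet> y"
  by (metis dot_lmul_matrix inner_commute vector_transpose_matrix)

lemma det_nz_vec:
  fixes E :: "real^'n^'n"
  assumes "det E \<noteq> 0" "x \<noteq> 0" shows "E *v x \<noteq> 0"
proof
  assume h: "E *v x = 0"
  from assms(1) obtain F where "F ** E = mat 1"
    using invertible_det_nz invertible_left_inverse by blast
  then have "x = F *v (E *v x)" by (simp add: matrix_vector_mul_assoc)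
  then show False using h assms(2) by simp
qed

lemma pd_congr:
  fixes E :: "real^'n^'n"
  assumes "pd B" "det E \<noteq> 0"
  shows "pd (E ** B ** transpose E)"
  unfolding pd_def
proof safe
  show "transpose (E ** B ** transpose E) = E ** B ** transpose E"
    using assms(1) unfolding pd_def by (simp add: matrix_transpose_mul matrix_mul_assoc)
next
  fix x :: "real^'n" assume "x \<noteq> 0"
  have "transpose E *v x \<noteq> 0"
    using det_nz_vec[of "transpose E" x] assms(2) \<open>x \<noteq> 0\<close> by simp
  then have "(transpose E *v x) \<bullet> (B *v (transpose E *v x)) > 0" using assms(1) unfolding pd_def by blast
  then show "x \<bullet> ((E ** B ** transpose E) *v x) > 0"
    by (metis inner_commute inner_mat_transpose matrix_vector_mul_assoc)
qed



definition elimE :: "real^'n^'n \<Rightarrow> 'n \<Rightarrow> real^'n^'n" where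
  "elimE B k = (\<chi> i j. (if i = j then 1 else 0) - (if j = k \<and> i \<noteq> k then B$i$k / B$k$k else 0))"

lemma row_mat1: "row j (mat 1 :: real^'n^'n) = axis j 1"
  by (simp add: row_def mat_def axis_def vec_eq_iff)

lemma det_elimE:
  fixes B :: "real^'n^'n"
  shows "det (elimE B k) = 1"
proof -
  define y :: "real^'n" where "y = (\<chi> j. if j = k then 0 else - (B$j$k / B$k$k))"
  have yspan: "y \<in> vec.span {row j (mat 1 :: real^'n^'n) |j. j \<noteq> k}"
  proof -
    have "(\<Sum>j\<in>UNIV - {k}. (y$j) *s axis j 1) $ i = y $ i" for i
    proof -
      have "(\<Sum>j\<in>UNIV - {k}. (y$j) *s axis j 1) $ i = (\<Sum>j\<in>UNIV - {k}. (if j = i then y$j else 0))"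
        by (simp add: sum_component axis_def if_distrib cong: if_cong)
      also have "\<dots> = y $ i" by (simp add: sum.delta'[of _ i "\<lambda>j. y$j"] y_def)
      finally show ?thesis .
    qed
    then have "y = (\<Sum>j\<in>UNIV - {k}. (y$j) *s axis j 1)" by (simp add: vec_eq_iff)
    moreover have "(\<Sum>j\<in>UNIV - {k}. (y$j) *s axis j 1) \<in> vec.span {row j (mat 1 :: real^'n^'n) |j. j \<noteq> k}"
      by (intro vec.span_sum vec.span_scale vec.span_base) (auto simp: row_mat1)
    ultimately show ?thesis by simp
  qed
  have "transpose (elimE B k) = (\<chi> r. if r = k then row k (mat 1) + y else row r (mat 1))"
    by (auto simp: vec_eq_iff elimE_def transpose_def row_def mat_def y_def)
  then have "det (transpose (elimE B k)) = det (mat 1 :: real^'n^'n)"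
    using det_row_span[OF yspan] by simp
  then show ?thesis by simp
qed

lemma elimE_left:
  fixes B :: "real^'n^'n"
  shows "(elimE B k ** B)$i$j = B$i$j - (if i \<noteq> k then B$i$k / B$k$k * B$k$j else 0)"
  by (simp add: matrix_matrix_mult_def elimE_def left_diff_distrib sum_subtractf if_distrib[of "\<lambda>x. x * _"]
      sum.delta cong: if_cong)

lemma elimE_right:
  fixes B M :: "real^'n^'n"
  shows "(M ** transpose (elimE B k))$i$j = M$i$j - (if j \<noteq> k then B$j$k / B$k$k * M$i$k else 0)"
  by (simp add: matrix_matrix_mult_def transpose_def elimE_def right_diff_distrib sum_subtractf
        if_distrib[of "\<lambda>x. _ * x"] sum.delta cong: if_cong)

lemma elimE_entries:
  fixes B :: "real^'n^'n"
  assumes "pd B"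
  shows "(elimE B k ** B ** transpose (elimE B k))$i$j =
     (if i = k \<or> j = k then (if i = j then B$k$k else 0) else B$i$j - B$i$k * B$k$j / B$k$k)"
proof -
  have kk: "B$k$k \<noteq> 0" using pd_diag_pos[OF assms] by (metis less_irrefl)
  have "(elimE B k ** B ** transpose (elimE B k))$i$j =
      (elimE B k ** B)$i$j - (if j \<noteq> k then B$j$k / B$k$k * (elimE B k ** B)$i$k else 0)"
    by (rule elimE_right)
  also have "\<dots> = (if i = k \<or> j = k then (if i = j then B$k$k else 0) else B$i$j - B$i$k * B$k$j / B$k$k)"
    using kk pd_sym[OF assms, of j k] pd_sym[OF assms, of k j] by (auto simp: elimE_left field_simps)
  finally show ?thesis .
qed



lemma hadamard_aux:
  fixes U :: "'n::finite set" and B :: "real^'n^'n"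
  assumes "finite U" "pd B" "\<And>i j. i \<notin> U \<Longrightarrow> j \<noteq> i \<Longrightarrow> B$i$j = 0"
  shows "0 < det B \<and> det B \<le> (\<Prod>i\<in>UNIV. B$i$i)"
  using assms
proof (induction U arbitrary: B rule: finite_induct)
  case empty
  then have "det B = (\<Prod>i\<in>UNIV. B$i$i)" by (intro det_diagonal) auto
  moreover have "0 < (\<Prod>i\<in>UNIV. B$i$i)" using pd_diag_pos[OF empty(1)] by (simp add: prod_pos)
  ultimately show ?case by simp
next
  case (insert k U)
  define B' where "B' = elimE B k ** B ** transpose (elimE B k)"
  have pd': "pd B'" unfolding B'_def by (rule pd_congr[OF insert(4)]) (simp add: det_elimE)
  have ent: "B'$i$j = (if i = k \<or> j = k then (if i = j then B$k$k else 0) else B$i$j - B$i$k * B$k$j / B$k$k)" for i j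
    unfolding B'_def by (rule elimE_entries[OF insert(4)])
  have z: "B'$i$j = 0" if "i \<notin> U" "j \<noteq> i" for i j
  proof (cases "i = k")
    case True then show ?thesis using that by (simp add: ent)
  next
    case False
    then have "B$i$k = 0" "B$i$j = 0" using insert(5)[of i] that by auto
    then show ?thesis using that by (simp add: ent)
  qed
  have IH: "0 < det B' \<and> det B' \<le> (\<Prod>i\<in>UNIV. B'$i$i)" using insert(3)[OF pd' z] by blast
  have "det B' = det B" unfolding B'_def by (simp add: det_mul det_elimE)
  moreover have "(\<Prod>i\<in>UNIV. B'$i$i) \<le> (\<Prod>i\<in>UNIV. B$i$i)"
  proof (rule prod_mono, rule conjI)
    fix i
    show "0 \<le> B'$i$i" using pd_diag_pos[OF pd'] less_imp_le by blast
    have "B$k$k > 0" using pd_diag_pos[OF insert(4)] .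
    moreover have "B$k$i = B$i$k" using pd_sym[OF insert(4)] .
    ultimately have "B$i$k * B$k$i / B$k$k \<ge> 0" by simp
    then show "B'$i$i \<le> B$i$i" by (auto simp: ent)
  qed
  ultimately show ?case using IH by linarith
qed

lemma hadamard:
  fixes B :: "real^'n^'n"
  assumes "pd B"
  shows "0 < det B \<and> det B \<le> (\<Prod>i\<in>UNIV. B$i$i)"
  by (rule hadamard_aux[of UNIV]) (use assms in auto)



definition ipm :: "real^'n^'n \<Rightarrow> real^'n \<Rightarrow> real^'n \<Rightarrow> real" where
  "ipm H u v = u \<bullet> (H *v v)"

definition orthonormal :: "real^'n^'n \<Rightarrow> (real^'n) set \<Rightarrow> bool" where
  "orthonormal H S \<longleftrightarrow> (\<forall>e\<in>S. ipm H e e = 1) \<and> (\<forall>e\<in>S. \<forall>e'\<in>S. e \<noteq> e' \<longrightarrow> ipm H e e' = 0)"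

lemma ipm_zero[simp]: "ipm H u 0 = 0"
  by (simp add: ipm_def)

lemma ipm_alt: "pd H \<Longrightarrow> ipm H u v = (H *v u) \<bullet> v"
  unfolding ipm_def pd_def by (metis inner_mat_transpose)

lemma ipm_sym: "pd H \<Longrightarrow> ipm H u v = ipm H v u"
  by (metis ipm_alt ipm_def inner_commute)

lemma ipm_add: "pd H \<Longrightarrow> ipm H u (a + b) = ipm H u a + ipm H u b"
  by (simp add: ipm_alt inner_add_right)

lemma ipm_scale: "pd H \<Longrightarrow> ipm H u (r *\<^sub>R a) = r * ipm H u a"
  by (simp add: ipm_alt)

lemma ipm_diff: "pd H \<Longrightarrow> ipm H u (a - b) = ipm H u a - ipm H u b"
  by (simp add: ipm_alt inner_diff_right)

lemma ipm_sum: "pd H \<Longrightarrow> ipm H u (\<Sum>v\<in>S. c v *\<^sub>R v) = (\<Sum>v\<in>S. c v * ipm H u v)"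
  by (simp add: ipm_alt inner_sum_right)

lemma orth_indep:
  assumes "pd H" "finite S" "orthonormal H S"
  shows "independent S"
  unfolding independent_explicit
proof (intro conjI allI impI ballI)
  show "finite S" by fact
  fix c e assume sum0: "(\<Sum>v\<in>S. c v *\<^sub>R v) = 0" and e: "e \<in> S"
  have "0 = ipm H e (\<Sum>v\<in>S. c v *\<^sub>R v)" by (simp add: sum0 ipm_def)
  also have "\<dots> = (\<Sum>v\<in>S. c v * ipm H e v)" by (rule ipm_sum[OF assms(1)])
  also have "\<dots> = (\<Sum>v\<in>S. if v = e then c v else 0)"
  proof (rule sum.cong[OF refl])
    fix v assume v: "v \<in> S"
    show "c v * ipm H e v = (if v = e then c v else 0)"
    proof (cases "v = e")
      case True then show ?thesis using assms(3) e unfolding orthonormal_def by simp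
    next
      case False then show ?thesis using assms(3) e v unfolding orthonormal_def by simp
    qed
  qed
  also have "\<dots> = c e" using e assms(2) by (simp add: sum.delta')
  finally show "c e = 0" by simp
qed

lemma orth_card:
  assumes "pd H" "finite S" "orthonormal H S"
  shows "card S = dim (span S)"
  using dim_span_eq_card_independent[OF orth_indep[OF assms]] by simp

lemma gs_extend:
  assumes H: "pd H" and V: "subspace V" and u: "u \<in> V" "ipm H u u = 1"
    and S: "finite S" "S \<subseteq> {q\<in>V. ipm H u q = 0}" "span S = {q\<in>V. ipm H u q = 0}" "orthonormal H S"
  shows "finite (insert u S) \<and> insert u S \<subseteq> V \<and> span (insert u S) = V \<and> orthonormal H (insert u S)"
proof (intro conjI)
  show "finite (insert u S)" using S by simp
  show sub: "insert u S \<subseteq> V" using S u by auto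
  show "span (insert u S) = V"
  proof
    show "span (insert u S) \<subseteq> V" using span_minimal[OF sub V] .
    show "V \<subseteq> span (insert u S)"
    proof
      fix q assume q: "q \<in> V"
      have "q - ipm H u q *\<^sub>R u \<in> {q\<in>V. ipm H u q = 0}"
        using q u H V by (simp add: ipm_diff ipm_scale subspace_diff subspace_scale)
      then have "q - ipm H u q *\<^sub>R u \<in> span (insert u S)"
        using S(3) span_mono[of S "insert u S"] by auto
      moreover have "ipm H u q *\<^sub>R u \<in> span (insert u S)"
        by (intro span_scale span_base) simp
      ultimately have "(q - ipm H u q *\<^sub>R u) + ipm H u q *\<^sub>R u \<in> span (insert u S)"
        by (rule span_add)
      then show "q \<in> span (insert u S)" by simp
    qed
  qed
  show "orthonormal H (insert u S)"
    using S(2,4) u(2) ipm_sym[OF H] unfolding orthonormal_def by auto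
qed

lemma gs:
  assumes H: "pd H"
  shows "subspace V \<Longrightarrow> \<exists>S. finite S \<and> S \<subseteq> V \<and> span S = V \<and> orthonormal H S"
proof (induction "dim V" arbitrary: V rule: less_induct)
  case less
  show ?case
  proof (cases "V \<subseteq> {0}")
    case True
    then have "V = {0}" using less(2) subspace_0 by blast
    then show ?thesis by (intro exI[of _ "{}"]) (auto simp: orthonormal_def)
  next
    case False
    then obtain p where p: "p \<in> V" "p \<noteq> 0" by blast
    have pp: "ipm H p p > 0" using H p(2) unfolding pd_def ipm_def by blast
    define u where "u = (1 / sqrt (ipm H p p)) *\<^sub>R p"
    have uV: "u \<in> V" unfolding u_def using p less(2) by (simp add: subspace_scale)
    have uu: "ipm H u u = 1"
      unfolding u_def using pp by (simp add: ipm_scale[OF H] ipm_sym[OF H, of "_ *\<^sub>R _"])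
    define W where "W = {q\<in>V. ipm H u q = 0}"
    have W: "subspace W" unfolding W_def subspace_def using less(2)
      by (auto simp: ipm_add[OF H] ipm_scale[OF H] subspace_add subspace_scale subspace_0)
    have "W \<subseteq> V" unfolding W_def by auto
    moreover have "u \<notin> W" using uu unfolding W_def by auto
    ultimately have "W \<subset> V" using uV by blast
    moreover have "span W = W" "span V = V" by (simp_all add: span_eq_iff W less(2))
    ultimately have "dim W < dim V" using dim_psubset[of W V] by metis
    then obtain S where S: "finite S" "S \<subseteq> W" "span S = W" "orthonormal H S" using less(1) W by blast
    show ?thesis using gs_extend[OF H less(2) uV uu, of S] S unfolding W_def by blast
  qed
qed

lemma gs_with:
  assumes H: "pd H" and V: "subspace V" and u: "u \<in> V" "ipm H u u = 1"
  shows "\<exists>S. finite S \<and> S \<subseteq> V \<and> span S = V \<and> orthonormal H S \<and> u \<in> S"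
proof -
  define W where "W = {q\<in>V. ipm H u q = 0}"
  have W: "subspace W" unfolding W_def subspace_def using V
    by (auto simp: ipm_add[OF H] ipm_scale[OF H] subspace_add subspace_scale subspace_0)
  obtain S where S: "finite S" "S \<subseteq> W" "span S = W" "orthonormal H S" using gs[OF H W] by blast
  show ?thesis using gs_extend[OF H V u, of S] S unfolding W_def by blast
qed



lemma column_mult: "column j ((A::real^'n^'n) ** M) = A *v column j M"
  by (simp add: vec_eq_iff column_def matrix_matrix_mult_def matrix_vector_mult_def)

lemma gram_entry:
  fixes M H :: "real^'n^'n"
  shows "(transpose M ** H ** M)$i$j = ipm H (column i M) (column j M)"
proof -
  have "(transpose M ** H ** M)$i$j = (transpose M ** (H ** M))$i$j" by (simp add: matrix_mul_assoc)
  also have "\<dots> = (\<Sum>l\<in>UNIV. M$l$i * (H ** M)$l$j)"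
    by (simp add: matrix_matrix_mult_def transpose_def)
  also have "\<dots> = column i M \<bullet> column j (H ** M)"
    by (simp add: inner_vec_def column_def)
  also have "\<dots> = ipm H (column i M) (column j M)" by (simp add: column_mult ipm_def)
  finally show ?thesis .
qed

lemma riem_pd: "riem_metric G \<Longrightarrow> pd (G x)"
  unfolding riem_metric_def pd_def ip_def by blast

lemma ip_ipm: "ip G x u v = ipm (G x) u v"
  by (simp add: ip_def ipm_def)

lemma nrm_scale: "nrm G x (r *\<^sub>R v) = \<bar>r\<bar> * nrm G x v"
proof -
  have "ip G x (r *\<^sub>R v) (r *\<^sub>R v) = r\<^sup>2 * ip G x v v"
    by (simp add: ip_def matrix_vector_mult_scaleR power2_eq_square)
  then show ?thesis by (simp add: nrm_def real_sqrt_mult)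
qed

lemma pow_powr: "0 < (z::real) \<Longrightarrow> (z ^ n) powr t = (z powr t) ^ n"
  by (simp add: powr_realpow[symmetric] powr_powr powr_power mult.commute)



theorem lemma2p5:
  fixes f :: "real \<Rightarrow> 'm::topological_space \<Rightarrow> 'm"
    and Df :: "real \<Rightarrow> 'm \<Rightarrow> real^'n^'n"
    and X :: "'m \<Rightarrow> real^'n"
    and Ess Euu :: "'m \<Rightarrow> (real^'n) set"
    and G G' :: "'m \<Rightarrow> real^'n^'n"
    and \<phi> :: "'m \<Rightarrow> real"
    and c mum mup lam lap bm bp :: real
    and ns nu :: nat
  assumes compact: "compact (UNIV :: 'm set)"
    and metric: "riem_metric G"
    and anos: "anosov f Df X Ess Euu G c mum mup lam lap"
    and vol: "preserves_volume f Df G"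
    and dims: "\<And>x. dim (Ess x) = ns" "\<And>x. dim (Euu x) = nu"
    and metric': "riem_metric G'"
    and X_unit: "\<And>x. nrm G' x (X x) = 1"
    and orth: "\<And>x v w. v \<in> Ess x \<Longrightarrow> w \<in> Euu x \<Longrightarrow> ip G' x v w = 0"
              "\<And>x v. v \<in> Ess x \<Longrightarrow> ip G' x v (X x) = 0"
              "\<And>x w. w \<in> Euu x \<Longrightarrow> ip G' x w (X x) = 0"
    and phi_cont: "continuous_on UNIV \<phi>"
    and phi_pos: "\<And>x. \<phi> x > 0"
    and phi_def: "\<And>x. sqrt (det (G' x)) = \<phi> x * sqrt (det (G x))"
    and b_pos: "bm > 0" "bp > 0"
    and b_bounds: "\<And>x v. bm * nrm G x v \<le> nrm G' x v \<and> nrm G' x v \<le> bp * nrm G x v"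
    and x_v_w: "v \<in> Ess x" "w \<in> Euu x" "t \<ge> 0"
  shows "wedge_norm G' (f (-t) x) (Df (-t) x *v v) (Df (-t) x *v w)
         \<le> ((SUP y. \<phi> y) / (INF y. \<phi> y)) * ((bp / bm) * c) ^ (CARD('n) - 3)
           * (mup ^ (ns - 1) * lap ^ (nu - 1)) powr t * wedge_norm G' x v w"
proof -
  note fc = anos[unfolded anosov_def flow_cocycle_def]
  define y where "y = f (-t) x"
  define A where "A = Df t y"
  define P where "P = Df (-t) x"
  define u where "u = P *v v"
  define u' where "u' = P *v w"
  have fy: "f t y = x" using fc unfolding y_def by (metis add.right_inverse)
  have AP: "A ** P = mat 1" using fc unfolding A_def P_def y_def by (metis add.right_inverse)
  have Au: "A *v u = v" "A *v u' = w" unfolding u_def u'_def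
    by (simp_all add: matrix_vector_mul_assoc AP)
  have uE: "u \<in> Ess y" "u' \<in> Euu y" using fc x_v_w unfolding u_def u'_def P_def y_def by blast+
  have pdG': "\<And>z. pd (G' z)" using riem_pd[OF metric'] .
  have ipsym: "\<And>z a b. ip G' z a b = ip G' z b a" by (simp add: ip_ipm ipm_sym[OF pdG'])
  have nrm_nn: "\<And>z a. nrm G' z a \<ge> 0"
    using pdG' unfolding nrm_def ip_ipm pd_def ipm_def by (metis less_eq_real_def real_sqrt_ge_zero inner_zero_left)
  have wedge_orth: "wedge_norm G' z a b = nrm G' z a * nrm G' z b" if "ip G' z a b = 0" for z a b
    using that by (simp add: wedge_norm_def nrm_def real_sqrt_mult)
  have LHS: "wedge_norm G' (f (-t) x) (Df (-t) x *v v) (Df (-t) x *v w) = nrm G' y u * nrm G' y u'"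
    using wedge_orth orth(1)[OF uE] unfolding y_def u_def u'_def P_def by blast
  have RHSw: "wedge_norm G' x v w = nrm G' x v * nrm G' x w"
    using wedge_orth orth(1)[OF x_v_w(1,2)] by blast
  obtain xmin where xmin: "\<And>z. \<phi> xmin \<le> \<phi> z"
    using continuous_attains_inf[OF compact UNIV_not_empty phi_cont] by blast
  obtain xmax where xmax: "\<And>z. \<phi> z \<le> \<phi> xmax"
    using continuous_attains_sup[OF compact UNIV_not_empty phi_cont] by blast
  have bddb: "bdd_below (range \<phi>)" by (rule bdd_belowI[of _ "\<phi> xmin"]) (auto simp: xmin)
  have bdda: "bdd_above (range \<phi>)" by (rule bdd_aboveI[of _ "\<phi> xmax"]) (auto simp: xmax)
  have Inf_pos: "(INF z. \<phi> z) > 0"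
  proof -
    have "\<phi> xmin \<le> (INF z. \<phi> z)" by (rule cINF_greatest) (auto simp: xmin)
    then show ?thesis using phi_pos[of xmin] by linarith
  qed
  have Inf_le: "(INF z. \<phi> z) \<le> \<phi> z" for z by (rule cINF_lower[OF bddb]) simp
  have Sup_ge: "\<phi> z \<le> (SUP z. \<phi> z)" for z by (rule cSUP_upper[OF _ bdda]) simp
  have ratio: "\<phi> y / \<phi> x \<le> (SUP z. \<phi> z) / (INF z. \<phi> z)"
    by (meson Inf_le Inf_pos Sup_ge frac_le less_le_trans phi_pos less_imp_le)
  have ratio_nn: "0 \<le> (SUP z. \<phi> z) / (INF z. \<phi> z)"
    using Inf_pos Sup_ge[of x] phi_pos[of x] by simp

  have c_pos: "c > 0" and mup_pos: "mup > 0" and lap_pos: "lap > 0" using fc by auto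
  have ip_nn: "\<And>z e. ip G' z e e \<ge> 0"
    using pdG' unfolding ip_ipm pd_def ipm_def by (metis less_eq_real_def inner_zero_left order_refl)
  have nrm_sq: "\<And>z e. (nrm G' z e)\<^sup>2 = ipm (G' z) e e"
    using ip_nn by (simp add: nrm_def ip_ipm)
  have unit_ip: "\<And>z e. nrm G' z e = 1 \<Longrightarrow> ipm (G' z) e e = 1"
    using nrm_sq by (metis one_power2)
  have ip_unit: "\<And>z e. ipm (G' z) e e = 1 \<Longrightarrow> nrm G' z e = 1"
    by (simp add: nrm_def ip_ipm)
  have nrm0: "\<And>z. nrm G' z 0 = 0" by (simp add: nrm_def ip_def)
  have rhs_nn: "0 \<le> ((SUP y. \<phi> y) / (INF y. \<phi> y)) * ((bp / bm) * c) ^ (CARD('n) - 3)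
           * (mup ^ (ns - 1) * lap ^ (nu - 1)) powr t * wedge_norm G' x v w"
    unfolding RHSw using b_pos c_pos
    by (intro mult_nonneg_nonneg ratio_nn zero_le_power nrm_nn powr_ge_zero) auto
  show ?thesis
  proof (cases "u = 0 \<or> u' = 0")
    case True
    then show ?thesis using rhs_nn by (auto simp: LHS nrm0)
  next
    case False
    then have u0: "u \<noteq> 0" "u' \<noteq> 0" by auto

    define H where "H = G' y"
    define K where "K = G' x"
    have pH: "pd H" and pK: "pd K" unfolding H_def K_def by (rule pdG')+
    define a where "a = nrm G' y u"
    define a' where "a' = nrm G' y u'"
    have a_pos: "a > 0" "a' > 0"
      using u0 pdG'[of y] unfolding a_def a'_def nrm_def ip_ipm pd_def ipm_def by auto
    define e1 where "e1 = (1/a) *\<^sub>R u"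
    define e2 where "e2 = (1/a') *\<^sub>R u'"
    have e1n: "nrm G' y e1 = 1" "nrm G' y e2 = 1"
      unfolding e1_def e2_def using a_pos by (simp_all add: nrm_scale a_def a'_def)
    have subs: "subspace (Ess y)" "subspace (Euu y)" using fc by auto
    have e1E: "e1 \<in> Ess y" "e2 \<in> Euu y" unfolding e1_def e2_def using uE subs by (simp_all add: subspace_scale)
    obtain S1 where S1: "finite S1" "S1 \<subseteq> Ess y" "span S1 = Ess y" "orthonormal H S1" "e1 \<in> S1"
      using gs_with[OF pH subs(1) e1E(1)] unit_ip[OF e1n(1)] unfolding H_def by blast
    obtain S2 where S2: "finite S2" "S2 \<subseteq> Euu y" "span S2 = Euu y" "orthonormal H S2" "e2 \<in> S2"
      using gs_with[OF pH subs(2) e1E(2)] unit_ip[OF e1n(2)] unfolding H_def by blast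
    define X0 where "X0 = X y"
    have X0n: "ipm H X0 X0 = 1" unfolding H_def X0_def using unit_ip[OF X_unit] .
    have cS1: "card S1 = ns" using orth_card[OF pH S1(1,4)] S1(3) dims(1) by simp
    have cS2: "card S2 = nu" using orth_card[OF pH S2(1,4)] S2(3) dims(2) by simp
    have o12: "ipm H e e' = 0 \<and> ipm H e' e = 0" if "e \<in> S1" "e' \<in> S2" for e e'
    proof -
      have "ip G' y e e' = 0" using orth(1)[of e y e'] S1(2) S2(2) that by blast
      then show ?thesis using ipm_sym[OF pH, of e e'] by (simp add: ip_ipm H_def)
    qed
    have o1X: "ipm H e X0 = 0 \<and> ipm H X0 e = 0" if "e \<in> S1" for e
    proof -
      have "ip G' y e X0 = 0" using orth(2)[of e y] S1(2) that unfolding X0_def by blast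
      then show ?thesis using ipm_sym[OF pH, of e X0] by (simp add: ip_ipm H_def)
    qed
    have o2X: "ipm H e X0 = 0 \<and> ipm H X0 e = 0" if "e \<in> S2" for e
    proof -
      have "ip G' y e X0 = 0" using orth(3)[of e y] S2(2) that unfolding X0_def by blast
      then show ?thesis using ipm_sym[OF pH, of e X0] by (simp add: ip_ipm H_def)
    qed
    have S1n: "\<And>e. e \<in> S1 \<Longrightarrow> ipm H e e = 1" using S1(4) unfolding orthonormal_def by blast
    have S2n: "\<And>e. e \<in> S2 \<Longrightarrow> ipm H e e = 1" using S2(4) unfolding orthonormal_def by blast
    have disj: "S1 \<inter> S2 = {}" using o12 S1n by force
    have X0n1: "X0 \<notin> S1" using o1X X0n by force
    have X0n2: "X0 \<notin> S2" using o2X X0n by force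
    define T where "T = insert X0 (S1 \<union> S2)"
    have fT: "finite T" unfolding T_def using S1 S2 by simp
    have cT: "card T = CARD('n)"
    proof -
      have "card T = ns + nu + 1" unfolding T_def using S1(1) S2(1) disj X0n1 X0n2 cS1 cS2
        by (simp add: card_Un_disjoint)
      also have "\<dots> = CARD('n)" using fc dims by metis
      finally show ?thesis .
    qed
    have oT: "orthonormal H T"
      unfolding orthonormal_def T_def
    proof (intro conjI ballI impI)
      fix e assume "e \<in> insert X0 (S1 \<union> S2)"
      then show "ipm H e e = 1" using X0n S1n S2n by auto
    next
      fix e e' assume "e \<in> insert X0 (S1 \<union> S2)" "e' \<in> insert X0 (S1 \<union> S2)" "e \<noteq> e'"
      then show "ipm H e e' = 0"
        using o12 o1X o2X S1(4) S2(4) unfolding orthonormal_def by auto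
    qed
    obtain g where g: "bij_betw g (UNIV::'n set) T"
      using finite_same_card_bij[OF finite fT] cT by auto
    define M :: "real^'n^'n" where "M = (\<chi> i j. g j $ i)"
    have colM: "\<And>j. column j M = g j" by (simp add: M_def column_def vec_eq_iff)
    have gT: "\<And>i. g i \<in> T" using g by (auto simp: bij_betw_def)
    have ginj: "\<And>i j. g i = g j \<Longrightarrow> i = j" using g by (auto simp: bij_betw_def inj_def)
    have gram: "transpose M ** H ** M = mat 1"
    proof -
      have "(transpose M ** H ** M)$i$j = (mat 1 :: real^'n^'n)$i$j" for i j
        using oT gT[of i] gT[of j] ginj[of i j] unfolding gram_entry colM orthonormal_def mat_def
        by (cases "i = j") auto
      then show ?thesis by (simp add: vec_eq_iff)
    qed
    have detM: "det M * det H * det M = 1" using arg_cong[OF gram, of det] by (simp add: det_mul)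

    have detA: "det A * det P = 1" using arg_cong[OF AP, of det] by (simp add: det_mul)
    define N where "N = A ** M"
    have detN: "det N \<noteq> 0" unfolding N_def using detA detM by (auto simp: det_mul)
    define B where "B = transpose N ** K ** N"
    have pB: "pd B" using pd_congr[OF pK, of "transpose N"] detN unfolding B_def by simp
    have had: "0 < det B \<and> det B \<le> (\<Prod>i\<in>UNIV. B$i$i)" by (rule hadamard[OF pB])
    have detB: "det B = det A ^ 2 * det M ^ 2 * det K"
      unfolding B_def N_def by (simp add: det_mul power2_eq_square)
    have Bii: "B$i$i = (nrm G' x (A *v g i))\<^sup>2" for i
      unfolding B_def gram_entry column_mult N_def colM K_def nrm_sq ..
    have dK: "det K > 0" using hadamard[OF pK] by simp
    have dH: "det H > 0" using hadamard[OF pH] by simp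
    have volA: "sqrt (det (G x)) * det A = sqrt (det (G y))"
      using vol unfolding preserves_volume_def A_def using fy by metis
    have key: "\<phi> y * sqrt (det K) * det A = \<phi> x * sqrt (det H)"
      unfolding K_def H_def phi_def using volA by (metis mult.assoc mult.left_commute)
    have key2: "(\<phi> y)\<^sup>2 * det K * (det A)\<^sup>2 = (\<phi> x)\<^sup>2 * det H"
    proof -
      have "(\<phi> y * sqrt (det K) * det A)\<^sup>2 = (\<phi> x * sqrt (det H))\<^sup>2" using key by simp
      then show ?thesis using dK dH by (simp add: power_mult_distrib)
    qed
    have BH: "det B * det H = (det A)\<^sup>2 * det K"
    proof -
      have "det M ^ 2 * det H = 1" using detM by (simp add: power2_eq_square algebra_simps)
      then show ?thesis unfolding detB by (metis mult.assoc mult.commute mult_1_right)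
    qed
    have "(\<phi> y)\<^sup>2 * det B * det H = (\<phi> x)\<^sup>2 * det H"
    proof -
      have "(\<phi> y)\<^sup>2 * det B * det H = (\<phi> y)\<^sup>2 * ((det A)\<^sup>2 * det K)" using BH by (simp add: mult.assoc)
      also have "\<dots> = (\<phi> y)\<^sup>2 * det K * (det A)\<^sup>2" by (simp add: mult_ac)
      finally show ?thesis using key2 by simp
    qed
    then have dB: "(\<phi> y)\<^sup>2 * det B = (\<phi> x)\<^sup>2" using dH by simp
    define Pi where "Pi = (\<Prod>i\<in>UNIV. nrm G' x (A *v g i))"
    have Pi_nn: "Pi \<ge> 0" unfolding Pi_def by (intro prod_nonneg) (simp add: nrm_nn)
    have "(\<phi> x / \<phi> y)\<^sup>2 = det B" using dB phi_pos[of y] by (simp add: field_simps power_divide)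
    also have "\<dots> \<le> Pi\<^sup>2" using had unfolding Pi_def Bii by (simp add: prod_power_distrib)
    finally have phiPi: "\<phi> x / \<phi> y \<le> Pi" using Pi_nn by (rule power2_le_imp_le)

    define nrA where "nrA = (\<lambda>e. nrm G' x (A *v e))"
    have nrA_nn: "\<And>e. nrA e \<ge> 0" unfolding nrA_def by (rule nrm_nn)
    have PiT: "Pi = (\<Prod>e\<in>T. nrA e)"
      unfolding Pi_def nrA_def using prod.reindex_bij_betw[OF g, of "\<lambda>e. nrm G' x (A *v e)"] by simp
    have AX: "nrA X0 = 1" unfolding nrA_def X0_def A_def using fc fy X_unit by metis
    have PiS: "Pi = (\<Prod>e\<in>S1. nrA e) * (\<Prod>e\<in>S2. nrA e)"
      unfolding PiT T_def using S1(1) S2(1) X0n1 X0n2 disj AX by (simp add: prod.union_disjoint)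
    define ks where "ks = (bp / bm) * c * mup powr t"
    define ku where "ku = (bp / bm) * c * lap powr t"
    have ks_nn: "ks \<ge> 0" "ku \<ge> 0" unfolding ks_def ku_def using b_pos c_pos by auto
    have boundE: "nrA e \<le> (bp / bm) * c * mu powr t"
      if e: "nrm G' y e = 1" and dyn: "nrm G x (A *v e) \<le> c * mu powr t * nrm G y e" for e mu
    proof -
      have "nrA e \<le> bp * nrm G x (A *v e)" unfolding nrA_def using b_bounds by blast
      also have "\<dots> \<le> bp * (c * mu powr t * nrm G y e)" using dyn b_pos by simp
      also have "\<dots> \<le> bp * (c * mu powr t * (1 / bm))"
      proof -
        have "bm * nrm G y e \<le> 1" using b_bounds[of y e] e by simp
        then have "nrm G y e \<le> 1 / bm" using b_pos by (simp add: field_simps)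
        then show ?thesis using b_pos c_pos by (intro mult_left_mono) auto
      qed
      also have "\<dots> = (bp / bm) * c * mu powr t" by simp
      finally show ?thesis .
    qed
    have bS1: "nrA e \<le> ks" if "e \<in> S1" for e
    proof -
      have eE: "e \<in> Ess y" using S1(2) that by blast
      have "nrm G (f t y) (Df t y *v e) \<le> c * mup powr t * nrm G y e" using fc eE x_v_w(3) by blast
      then show ?thesis unfolding ks_def using boundE[of e mup] ip_unit S1n that unfolding A_def H_def fy by blast
    qed
    have bS2: "nrA e \<le> ku" if "e \<in> S2" for e
    proof -
      have eE: "e \<in> Euu y" using S2(2) that by blast
      have "nrm G (f t y) (Df t y *v e) \<le> c * lap powr t * nrm G y e" using fc eE x_v_w(3) by blast
      then show ?thesis unfolding ku_def using boundE[of e lap] ip_unit S2n that unfolding A_def H_def fy by blast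
    qed
    have ns1: "ns \<ge> 1" using cS1 S1(5) S1(1) by (metis card_0_eq empty_iff less_one not_le)
    have nu1: "nu \<ge> 1" using cS2 S2(5) S2(1) by (metis card_0_eq empty_iff less_one not_le)
    have Ae1: "nrA e1 = nrm G' x v / a" "nrA e2 = nrm G' x w / a'"
      unfolding nrA_def e1_def e2_def using a_pos Au by (simp_all add: matrix_vector_mult_scaleR nrm_scale)
    have P1: "(\<Prod>e\<in>S1. nrA e) \<le> nrm G' x v / a * ks ^ (ns - 1)"
    proof -
      have eq: "(\<Prod>e\<in>S1. nrA e) = nrA e1 * (\<Prod>e\<in>S1 - {e1}. nrA e)" using S1(1,5) by (simp add: prod.remove)
      have "(\<Prod>e\<in>S1 - {e1}. nrA e) \<le> (\<Prod>e\<in>S1 - {e1}. ks)"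
        using bS1 nrA_nn by (intro prod_mono) auto
      also have "\<dots> = ks ^ (ns - 1)" using cS1 S1(1,5) by simp
      finally have le: "(\<Prod>e\<in>S1 - {e1}. nrA e) \<le> ks ^ (ns - 1)" .
      show ?thesis using mult_left_mono[OF le nrA_nn[of e1]] eq Ae1(1) by simp
    qed
    have P2: "(\<Prod>e\<in>S2. nrA e) \<le> nrm G' x w / a' * ku ^ (nu - 1)"
    proof -
      have eq: "(\<Prod>e\<in>S2. nrA e) = nrA e2 * (\<Prod>e\<in>S2 - {e2}. nrA e)" using S2(1,5) by (simp add: prod.remove)
      have "(\<Prod>e\<in>S2 - {e2}. nrA e) \<le> (\<Prod>e\<in>S2 - {e2}. ku)"
        using bS2 nrA_nn by (intro prod_mono) auto
      also have "\<dots> = ku ^ (nu - 1)" using cS2 S2(1,5) by simp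
      finally have le: "(\<Prod>e\<in>S2 - {e2}. nrA e) \<le> ku ^ (nu - 1)" .
      show ?thesis using mult_left_mono[OF le nrA_nn[of e2]] eq Ae1(2) by simp
    qed
    define Q where "Q = ks ^ (ns - 1) * ku ^ (nu - 1)"
    have "\<phi> x / \<phi> y \<le> (nrm G' x v / a * ks ^ (ns - 1)) * (nrm G' x w / a' * ku ^ (nu - 1))"
      using phiPi unfolding PiS
      by (rule order_trans) (intro mult_mono P1 P2 prod_nonneg;
          simp add: nrA_nn nrm_nn ks_nn a_pos less_imp_le)
    also have "\<dots> = nrm G' x v * nrm G' x w * Q / (a * a')" unfolding Q_def by (simp add: field_simps)
    finally have "\<phi> x / \<phi> y \<le> nrm G' x v * nrm G' x w * Q / (a * a')" .
    then have aa: "a * a' \<le> (\<phi> y / \<phi> x) * (Q * (nrm G' x v * nrm G' x w))"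
      using a_pos phi_pos[of x] phi_pos[of y] by (simp add: field_simps)
    have Qnn: "Q * (nrm G' x v * nrm G' x w) \<ge> 0" unfolding Q_def using ks_nn nrm_nn by simp
    have aa2: "a * a' \<le> ((SUP z. \<phi> z) / (INF z. \<phi> z)) * (Q * (nrm G' x v * nrm G' x w))"
      using aa mult_right_mono[OF ratio Qnn] by linarith
    have Qeq: "Q = ((bp / bm) * c) ^ (CARD('n) - 3) * (mup ^ (ns - 1) * lap ^ (nu - 1)) powr t"
    proof -
      have "ns + nu + 1 = CARD('n)" using fc dims by metis
      then have n3: "CARD('n) - 3 = (ns - 1) + (nu - 1)" using ns1 nu1 by linarith
      have k1: "ks ^ (ns - 1) = ((bp/bm)*c)^(ns-1) * (mup powr t)^(ns-1)" unfolding ks_def by (rule power_mult_distrib)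
      have k2: "ku ^ (nu - 1) = ((bp/bm)*c)^(nu-1) * (lap powr t)^(nu-1)" unfolding ku_def by (rule power_mult_distrib)
      have p: "(mup ^ (ns - 1) * lap ^ (nu - 1)) powr t = (mup powr t)^(ns-1) * (lap powr t)^(nu-1)"
        using mup_pos lap_pos by (simp add: powr_mult pow_powr)
      show ?thesis unfolding Q_def k1 k2 p n3 power_add by (simp only: mult_ac)
    qed
    show ?thesis unfolding LHS RHSw using aa2 unfolding Qeq a_def a'_def by (simp add: mult_ac)
  qed
qed


end
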